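(* Let $D$ and $X$ be finite sets and $w \colon \overline{D^X}\to\mathbb{R}$ a $(D,X)$-ranking function. Then $w$ is subset-monotone if and only if the following holds: for all partial assignments $\tau_1,\tau_2,\sigma_1,\sigma_2$ such that $\tau_i$ is disjoint from $\sigma_i$ for each $i\in\{1,2\}$, if $w(\tau_1)\le w(\tau_2)$ and $w(\sigma_1)\le w(\sigma_2)$, then $w(\tau_1\times\sigma_1)\le w(\tau_2\times\sigma_2)$.
   Context: A partial assignment on domain $D$ and variables $Y \subseteq X$ is a map $Y \to D\cup\{\bot\}$ ($\bot$ = undefined); $\overline{D^Y}$ is the set of these. Two partial assignments $\tau\in\overline{D^Y}$, $\sigma\in\overline{D^Z}$ are disjoint if $Y\cap Z=\emptyset$, and then $\tau\times\sigma\in\overline{D^{Y\cup Z}}$ agrees with $\tau$ on $Y$ and $\sigma$ on $Z$. A $(D,X)$-ranking function is any function $w\colon\overline{D^X}\to\mathbb{R}$; for $\tau \in \overline{D^Y}$ with $Y\subseteq X$, $w(\tau)$ denotes $w$ of the extension of $\tau$ assigning $\bot$ to all variables in $X\setminus Y$. $w$ is subset-monotone if for every $Y\subseteq X$, all $\tau_1,\tau_2\in\overline{D^Y}$ with $w(\tau_1)\le w(\tau_2)$, and all $\sigma\in\overline{D^{X\setminus Y}}$, we have $w(\sigma\times\tau_1)\le w(\sigma\times\tau_2)$. In the stated condition, $\tau_1,\tau_2$ (resp.\ $\sigma_1, \sigma_2$) are understood to range over partial assignments on a common variable set $Y$ (resp.\ $Z$) with $Y \cap Z = \emptyset$ and $Y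 \cup Z \subseteq X$. *)

theory Defs
  imports Complex_Main
begin

text \<open>A partial assignment on domain D and variable set Y is represented by a
function of type 'x => 'd option (None = undefined, the bottom value) that takes
values in D or None on Y and is None outside Y. Thus its extension by bottom to
any superset of Y is the function itself.\<close>

definition partial_assignments :: "'d set \<Rightarrow> 'x set \<Rightarrow> ('x \<Rightarrow> 'd option) set" where
  "partial_assignments D Y =
     {f. (\<forall>x\<in>Y. f x = None \<or> (\<exists>d\<in>D. f x = Some d)) \<and> (\<forall>x. x \<notin> Y \<longrightarrow> f x = None)}"

definition pa_prod :: "'x set \<Rightarrow> ('x \<Rightarrow> 'd option) \<Rightarrow> ('x \<Rightarrow> 'd option) \<Rightarrow> ('x \<Rightarrow> 'd option)" where
  "pa_prod Y \<tau> \<sigma> = (\<lambda>x. if x \<in> Y then \<tau> x else \<sigma> x)"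

text \<open>A (D,X)-ranking function is w :: ('x => 'd option) => real; only its values on
partial_assignments D X matter.\<close>

definition subset_monotone :: "'d set \<Rightarrow> 'x set \<Rightarrow> (('x \<Rightarrow> 'd option) \<Rightarrow> real) \<Rightarrow> bool" where
  "subset_monotone D X w \<longleftrightarrow>
     (\<forall>Y. Y \<subseteq> X \<longrightarrow>
       (\<forall>\<tau>1\<in>partial_assignments D Y. \<forall>\<tau>2\<in>partial_assignments D Y.
          w \<tau>1 \<le> w \<tau>2 \<longrightarrow>
          (\<forall>\<sigma>\<in>partial_assignments D (X - Y).
             w (pa_prod (X - Y) \<sigma> \<tau>1) \<le> w (pa_prod (X - Y) \<sigma> \<tau>2))))"

end

theory Submission
  imports Defs
begin

lemma pa_mono: "f \<in> partial_assignments D Y \<Longrightarrow> Y \<subseteq> A \<Longrightarrow> f \<in> partial_assignments D A"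
  unfolding partial_assignments_def by blast

lemma pa_none: "f \<in> partial_assignments D Y \<Longrightarrow> x \<notin> Y \<Longrightarrow> f x = None"
  unfolding partial_assignments_def by blast

lemma prod1:
  assumes "\<tau> \<in> partial_assignments D Y" "\<sigma> \<in> partial_assignments D Z"
    "Y \<subseteq> A" "A \<inter> Z = {}"
  shows "pa_prod A \<tau> \<sigma> = pa_prod Y \<tau> \<sigma>"
proof (rule ext)
  fix x
  have "x \<notin> Y \<Longrightarrow> \<tau> x = None" "x \<notin> Z \<Longrightarrow> \<sigma> x = None"
    using pa_none[OF assms(1)] pa_none[OF assms(2)] by auto
  then show "pa_prod A \<tau> \<sigma> x = pa_prod Y \<tau> \<sigma> x"
    using assms(3,4) unfolding pa_prod_def by (cases "x \<in> Z") auto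
qed

lemma prod2:
  assumes "\<tau> \<in> partial_assignments D Y" "\<sigma> \<in> partial_assignments D Z"
    "Y \<inter> Z = {}" "Z \<subseteq> A" "A \<inter> Y = {}"
  shows "pa_prod A \<sigma> \<tau> = pa_prod Y \<tau> \<sigma>"
proof (rule ext)
  fix x
  have "x \<notin> Y \<Longrightarrow> \<tau> x = None" "x \<notin> Z \<Longrightarrow> \<sigma> x = None"
    using pa_none[OF assms(1)] pa_none[OF assms(2)] by auto
  then show "pa_prod A \<sigma> \<tau> x = pa_prod Y \<tau> \<sigma> x"
    using assms(3-5) unfolding pa_prod_def by (cases "x \<in> Z") auto
qed

theorem lemmaA1:
  fixes D :: "'d set" and X :: "'x set" and w :: "('x \<Rightarrow> 'd option) \<Rightarrow> real"
  assumes "finite D" and "finite X"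
  shows "subset_monotone D X w \<longleftrightarrow>
    (\<forall>Y Z. Y \<inter> Z = {} \<and> Y \<union> Z \<subseteq> X \<longrightarrow>
      (\<forall>\<tau>1\<in>partial_assignments D Y. \<forall>\<tau>2\<in>partial_assignments D Y.
       \<forall>\<sigma>1\<in>partial_assignments D Z. \<forall>\<sigma>2\<in>partial_assignments D Z.
         w \<tau>1 \<le> w \<tau>2 \<longrightarrow> w \<sigma>1 \<le> w \<sigma>2 \<longrightarrow>
         w (pa_prod Y \<tau>1 \<sigma>1) \<le> w (pa_prod Y \<tau>2 \<sigma>2)))"
proof
  assume sm: "subset_monotone D X w"
  show "\<forall>Y Z. Y \<inter> Z = {} \<and> Y \<union> Z \<subseteq> X \<longrightarrow>
      (\<forall>\<tau>1\<in>partial_assignments D Y. \<forall>\<tau>2\<in>partial_assignments D Y.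
       \<forall>\<sigma>1\<in>partial_assignments D Z. \<forall>\<sigma>2\<in>partial_assignments D Z.
         w \<tau>1 \<le> w \<tau>2 \<longrightarrow> w \<sigma>1 \<le> w \<sigma>2 \<longrightarrow>
         w (pa_prod Y \<tau>1 \<sigma>1) \<le> w (pa_prod Y \<tau>2 \<sigma>2))"
  proof (intro allI impI ballI)
    fix Y Z t1 t2 s1 s2
    assume YZ: "Y \<inter> Z = {} \<and> Y \<union> Z \<subseteq> X"
      and t1: "t1 \<in> partial_assignments D Y" and t2: "t2 \<in> partial_assignments D Y"
      and s1: "s1 \<in> partial_assignments D Z" and s2: "s2 \<in> partial_assignments D Z"
      and wt: "w t1 \<le> w t2" and ws: "w s1 \<le> w s2"
    have t1': "t1 \<in> partial_assignments D (X - Z)" using YZ by (intro pa_mono[OF t1]) auto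
    have s2': "s2 \<in> partial_assignments D (X - Y)" using YZ by (intro pa_mono[OF s2]) auto
    have sm': "\<And>Y' a b c. Y' \<subseteq> X \<Longrightarrow> a \<in> partial_assignments D Y' \<Longrightarrow> b \<in> partial_assignments D Y'
       \<Longrightarrow> w a \<le> w b \<Longrightarrow> c \<in> partial_assignments D (X - Y')
       \<Longrightarrow> w (pa_prod (X - Y') c a) \<le> w (pa_prod (X - Y') c b)"
      using sm unfolding subset_monotone_def by blast
    have a: "w (pa_prod (X - Z) t1 s1) \<le> w (pa_prod (X - Z) t1 s2)"
      by (rule sm'[OF _ s1 s2 ws t1']) (use YZ in auto)
    have b: "w (pa_prod (X - Y) s2 t1) \<le> w (pa_prod (X - Y) s2 t2)"
      by (rule sm'[OF _ t1 t2 wt s2']) (use YZ in auto)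
    have e1: "pa_prod (X - Z) t1 s1 = pa_prod Y t1 s1" by (rule prod1[OF t1 s1]) (use YZ in auto)
    have e2: "pa_prod (X - Z) t1 s2 = pa_prod Y t1 s2" by (rule prod1[OF t1 s2]) (use YZ in auto)
    have e3: "pa_prod (X - Y) s2 t1 = pa_prod Y t1 s2" by (rule prod2[OF t1 s2]) (use YZ in auto)
    have e4: "pa_prod (X - Y) s2 t2 = pa_prod Y t2 s2" by (rule prod2[OF t2 s2]) (use YZ in auto)
    show "w (pa_prod Y t1 s1) \<le> w (pa_prod Y t2 s2)" using a b e1 e2 e3 e4 by simp
  qed
next
  assume H: "\<forall>Y Z. Y \<inter> Z = {} \<and> Y \<union> Z \<subseteq> X \<longrightarrow>
      (\<forall>\<tau>1\<in>partial_assignments D Y. \<forall>\<tau>2\<in>partial_assignments D Y.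
       \<forall>\<sigma>1\<in>partial_assignments D Z. \<forall>\<sigma>2\<in>partial_assignments D Z.
         w \<tau>1 \<le> w \<tau>2 \<longrightarrow> w \<sigma>1 \<le> w \<sigma>2 \<longrightarrow>
         w (pa_prod Y \<tau>1 \<sigma>1) \<le> w (pa_prod Y \<tau>2 \<sigma>2))"
  show "subset_monotone D X w"
    unfolding subset_monotone_def
  proof (intro allI impI ballI)
    fix Y t1 t2 s
    assume "Y \<subseteq> X" "t1 \<in> partial_assignments D Y" "t2 \<in> partial_assignments D Y"
      "w t1 \<le> w t2" "s \<in> partial_assignments D (X - Y)"
    then show "w (pa_prod (X - Y) s t1) \<le> w (pa_prod (X - Y) s t2)"
      using H[rule_format, of "X - Y" Y s s t1 t2] by auto
  qed
qed

end
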